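(* Consider the affine discrete-time system $$x_{k+1}=Ax_k+Bu_k+e,\qquad y_k=Cx_k+Du_k+r,$$ with state $x_k\in\mathbb{R}^n$, input $u_k\in\mathbb{R}^m$, output $y_k\in\mathbb{R}^p$, matrices $A,B,C,D$ of compatible dimensions and constant vectors $e\in\mathbb{R}^n$, $r\in\mathbb{R}^p$. Let $\{u_k^{d},x_k^{d},y_k^{d}\}_{k=0}^{N-1}$ be an input-state-output trajectory of this system, and let $L\in\mathbb{N}$ with $L\le N$. Suppose the data $\{u_k^d\}_{k=0}^{N-1}$, $\{x_k^d\}_{k=0}^{N-L}$ are persistently exciting of order $L$, i.e. $$\operatorname{rank}\begin{bmatrix}H_L(u^d)\\ H_1(x^d_{[0,N-L]})\\ \mathbb{1}_{N-L+1}^\top\end{bmatrix}=mL+n+1 .$$ Then a sequence $\{u_k,y_k\}_{k=0}^{L-1}$ is an input-output trajectory of the system (for some initial state) if and only if there exists $\alpha\in\mathbb{R}^{N-L+1}$ such that $$\sum_{i=0}^{N-L}\alpha_i=1,\qquad \begin{bmatrix}H_L(u^d)\\ H_L(y^d)\end{bmatrix}\alpha=\begin{bmatrix}u\\ y\end{bmatrix},$$ where $u=(u_0^\top,\dots,u_{L-1}^\top)^\top$ and $y=(y_0^\top,\dots,y_{L-1}^\top)^\top$.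
   Context: For a sequence $\{z_k\}_{k=0}^{N-1}$, the Hankel matrix of depth $L$ is $$H_L(z)=\begin{bmatrix}z_0&z_1&\cdots&z_{N-L}\\ z_1&z_2&\cdots&z_{N-L+1}\\ \vdots&\vdots&\ddots&\vdots\\ z_{L-1}&z_L&\cdots&z_{N-1}\end{bmatrix},$$ and $z_{[a,b]}$ denotes the stacked window $(z_a^\top,\dots,z_b^\top)^\top$ (so $H_1(x^d_{[0,N-L]})=[x_0^d\ \cdots\ x_{N-L}^d]$). $\mathbb{1}_q$ denotes the $q$-dimensional column vector of ones. The matrices $A,B,C,D$ and vectors $e,r$ are unknown to the user but fixed. *)

theory Defs
  imports "Jordan_Normal_Form.DL_Rank"
begin

text \<open>Block Hankel matrix of depth L built from the q-dimensional vector sequence z_0,...,z_{N-1}: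
  it has q*L rows and N-L+1 columns; block row i, column j is z_{i+j}.\<close>
definition hankel :: "nat \<Rightarrow> nat \<Rightarrow> nat \<Rightarrow> (nat \<Rightarrow> real vec) \<Rightarrow> real mat" where
  "hankel q L N z = mat (q * L) (N - L + 1) (\<lambda>(i, j). z (j + i div q) $ (i mod q))"

definition stack :: "nat \<Rightarrow> nat \<Rightarrow> (nat \<Rightarrow> real vec) \<Rightarrow> real vec" where
  "stack q L z = vec (q * L) (\<lambda>i. z (i div q) $ (i mod q))"

definition pe_mat :: "nat \<Rightarrow> nat \<Rightarrow> nat \<Rightarrow> nat \<Rightarrow> (nat \<Rightarrow> real vec) \<Rightarrow> (nat \<Rightarrow> real vec) \<Rightarrow> real mat" where
  "pe_mat m n L N u x =
     (hankel m L N u @\<^sub>r hankel n 1 (N - L + 1) x) @\<^sub>r mat 1 (N - L + 1) (\<lambda>_. 1)"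

definition mrank :: "real mat \<Rightarrow> nat" where
  "mrank M = vec_space.rank (dim_row M) M"

definition is_traj ::
  "real mat \<Rightarrow> real mat \<Rightarrow> real mat \<Rightarrow> real mat \<Rightarrow> real vec \<Rightarrow> real vec \<Rightarrow> nat \<Rightarrow> nat \<Rightarrow>
   nat \<Rightarrow> (nat \<Rightarrow> real vec) \<Rightarrow> (nat \<Rightarrow> real vec) \<Rightarrow> (nat \<Rightarrow> real vec) \<Rightarrow> bool" where
  "is_traj A B C D e r n m T u x y \<longleftrightarrow>
     (\<forall>k<T. u k \<in> carrier_vec m \<and> x k \<in> carrier_vec n \<and>
            y k = C *\<^sub>v x k + D *\<^sub>v u k + r) \<and>
     (\<forall>k. k + 1 < T \<longrightarrow> x (k + 1) = A *\<^sub>v x k + B *\<^sub>v u k + e)"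

end

theory Submission
  imports Defs
begin

definition lc :: "nat \<Rightarrow> nat \<Rightarrow> real vec \<Rightarrow> (nat \<Rightarrow> real vec) \<Rightarrow> nat \<Rightarrow> real vec" where
  "lc q K \<alpha> z k = vec q (\<lambda>l. \<Sum>j<K. z (j + k) $ l * \<alpha> $ j)"

lemma lc_carrier[simp]: "lc q K \<alpha> z k \<in> carrier_vec q"
  by (simp add: lc_def)

lemma hankel_carrier[simp]: "hankel q L N z \<in> carrier_mat (q * L) (N - L + 1)"
  by (simp add: hankel_def)

lemma hankel_mult_index:
  assumes "\<alpha> \<in> carrier_vec (N - L + 1)" "i < q * L"
  shows "(hankel q L N z *\<^sub>v \<alpha>) $ i = (\<Sum>j<N - L + 1. z (j + i div q) $ (i mod q) * \<alpha> $ j)"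
  using assms by (simp add: hankel_def mult_mat_vec_def scalar_prod_def lessThan_atLeast0)

lemma hankel_eq_stack:
  assumes a: "\<alpha> \<in> carrier_vec (N - L + 1)" and w: "\<forall>k<L. w k \<in> carrier_vec q"
  shows "(hankel q L N z *\<^sub>v \<alpha> = stack q L w) \<longleftrightarrow> (\<forall>k<L. lc q (N - L + 1) \<alpha> z k = w k)"
proof
  assume eq: "hankel q L N z *\<^sub>v \<alpha> = stack q L w"
  show "\<forall>k<L. lc q (N - L + 1) \<alpha> z k = w k"
  proof (intro allI impI eq_vecI)
    fix k l assume k: "k < L" and l: "l < dim_vec (w k)"
    have lq: "l < q" using l w k by auto
    define i where "i = k * q + l"
    have i: "i < q * L"
    proof -
      have "i < (k + 1) * q" using lq by (simp add: i_def)
      also have "\<dots> \<le> L * q" using k by (intro mult_right_mono) auto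
      finally show ?thesis by (simp add: mult.commute)
    qed
    have d: "i div q = k" "i mod q = l" using lq by (auto simp: i_def)
    have "(hankel q L N z *\<^sub>v \<alpha>) $ i = stack q L w $ i" using eq by simp
    then show "lc q (N - L + 1) \<alpha> z k $ l = w k $ l"
      using hankel_mult_index[OF a i, of z] i d lq by (simp add: stack_def lc_def)
  next
    fix k assume "k < L" then show "dim_vec (lc q (N - L + 1) \<alpha> z k) = dim_vec (w k)"
      using w by (auto simp add: lc_def)
  qed
next
  assume h: "\<forall>k<L. lc q (N - L + 1) \<alpha> z k = w k"
  show "hankel q L N z *\<^sub>v \<alpha> = stack q L w"
  proof (rule eq_vecI)
    fix i assume "i < dim_vec (stack q L w)"
    then have i: "i < q * L" by (simp add: stack_def)
    then have qp: "q > 0" by (cases q) auto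
    have k: "i div q < L" using i by (simp add: less_mult_imp_div_less mult.commute)
    have l: "i mod q < q" using qp by simp
    have "w (i div q) $ (i mod q) = lc q (N - L + 1) \<alpha> z (i div q) $ (i mod q)" using h k by simp
    then show "(hankel q L N z *\<^sub>v \<alpha>) $ i = stack q L w $ i"
      using hankel_mult_index[OF a i, of z] i l by (simp add: stack_def lc_def)
  qed (simp add: stack_def hankel_def)
qed

lemma mat_lc:
  assumes A: "A \<in> carrier_mat a q" and z: "\<forall>j<K. z (j + k) \<in> carrier_vec q"
  shows "A *\<^sub>v lc q K \<alpha> z k = vec a (\<lambda>i. \<Sum>j<K. (A *\<^sub>v z (j + k)) $ i * \<alpha> $ j)"
proof (rule eq_vecI)
  fix i assume "i < dim_vec (vec a (\<lambda>i. \<Sum>j<K. (A *\<^sub>v z (j + k)) $ i * \<alpha> $ j))"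
  then have i: "i < a" by simp
  have "(A *\<^sub>v lc q K \<alpha> z k) $ i = (\<Sum>l<q. A $$ (i, l) * (\<Sum>j<K. z (j + k) $ l * \<alpha> $ j))"
    using A i by (simp add: mult_mat_vec_def scalar_prod_def lc_def lessThan_atLeast0)
  also have "\<dots> = (\<Sum>j<K. (\<Sum>l<q. A $$ (i, l) * z (j + k) $ l) * \<alpha> $ j)"
    by (simp add: sum_distrib_left sum_distrib_right mult.assoc) (rule sum.swap)
  also have "\<dots> = (\<Sum>j<K. (A *\<^sub>v z (j + k)) $ i * \<alpha> $ j)"
  proof (intro sum.cong refl)
    fix j assume "j \<in> {..<K}"
    then have "z (j + k) \<in> carrier_vec q" using z by auto
    then show "(\<Sum>l<q. A $$ (i, l) * z (j + k) $ l) * \<alpha> $ j = (A *\<^sub>v z (j + k)) $ i * \<alpha> $ j"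
      using A i by (simp add: mult_mat_vec_def scalar_prod_def lessThan_atLeast0)
  qed
  finally show "(A *\<^sub>v lc q K \<alpha> z k) $ i = vec a (\<lambda>i. \<Sum>j<K. (A *\<^sub>v z (j + k)) $ i * \<alpha> $ j) $ i"
    using i by simp
qed (use A in simp)

lemma dyn_lc:
  assumes A: "A \<in> carrier_mat n n" and B: "B \<in> carrier_mat n m" and e: "e \<in> carrier_vec n"
    and tr: "is_traj A B C D e r n m N ud xd yd"
    and s: "(\<Sum>i<K. \<alpha> $ i) = 1" and K: "K = N - L + 1" and LN: "L \<le> N" and k: "k + 1 < L"
  shows "lc n K \<alpha> xd (k + 1) = A *\<^sub>v lc n K \<alpha> xd k + B *\<^sub>v lc m K \<alpha> ud k + e"
proof -
  have jk: "j + k + 1 < N" if "j < K" for j using that K LN k by linarith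
  have cx: "\<forall>j<K. xd (j + k) \<in> carrier_vec n" and cu: "\<forall>j<K. ud (j + k) \<in> carrier_vec m"
    using tr jk unfolding is_traj_def by (auto dest!: jk)
  have step: "xd (j + (k + 1)) = A *\<^sub>v xd (j + k) + B *\<^sub>v ud (j + k) + e" if "j < K" for j
    using tr jk[OF that] unfolding is_traj_def by (simp add: add.assoc)
  show ?thesis
  proof (rule eq_vecI)
    fix l assume "l < dim_vec (A *\<^sub>v lc n K \<alpha> xd k + B *\<^sub>v lc m K \<alpha> ud k + e)"
    then have l: "l < n" using A e by simp
    have "lc n K \<alpha> xd (k + 1) $ l = (\<Sum>j<K. ((A *\<^sub>v xd (j + k)) $ l + (B *\<^sub>v ud (j + k)) $ l + e $ l) * \<alpha> $ j)"
      unfolding lc_def using l step cx cu A B e by (auto intro!: sum.cong)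
    also have "\<dots> = (\<Sum>j<K. (A *\<^sub>v xd (j + k)) $ l * \<alpha> $ j) + (\<Sum>j<K. (B *\<^sub>v ud (j + k)) $ l * \<alpha> $ j) + e $ l * (\<Sum>j<K. \<alpha> $ j)"
      by (simp add: distrib_right sum.distrib sum_distrib_left)
    also have "\<dots> = (A *\<^sub>v lc n K \<alpha> xd k + B *\<^sub>v lc m K \<alpha> ud k + e) $ l"
      using mat_lc[OF A cx, of \<alpha>] mat_lc[OF B cu, of \<alpha>] l A B e s by simp
    finally show "lc n K \<alpha> xd (k + 1) $ l = (A *\<^sub>v lc n K \<alpha> xd k + B *\<^sub>v lc m K \<alpha> ud k + e) $ l" .
  qed (use A B e in simp)
qed

lemma out_lc:
  assumes C: "C \<in> carrier_mat p n" and D: "D \<in> carrier_mat p m" and r: "r \<in> carrier_vec p"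
    and tr: "is_traj A B C D e r n m N ud xd yd"
    and s: "(\<Sum>i<K. \<alpha> $ i) = 1" and K: "K = N - L + 1" and LN: "L \<le> N" and k: "k < L"
  shows "lc p K \<alpha> yd k = C *\<^sub>v lc n K \<alpha> xd k + D *\<^sub>v lc m K \<alpha> ud k + r"
proof -
  have jk: "j + k < N" if "j < K" for j using that K LN k by linarith
  have cx: "\<forall>j<K. xd (j + k) \<in> carrier_vec n" and cu: "\<forall>j<K. ud (j + k) \<in> carrier_vec m"
    using tr jk unfolding is_traj_def by (auto dest!: jk)
  have step: "yd (j + k) = C *\<^sub>v xd (j + k) + D *\<^sub>v ud (j + k) + r" if "j < K" for j
    using tr jk[OF that] unfolding is_traj_def by simp
  show ?thesis
  proof (rule eq_vecI)
    fix l assume "l < dim_vec (C *\<^sub>v lc n K \<alpha> xd k + D *\<^sub>v lc m K \<alpha> ud k + r)"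
    then have l: "l < p" using C r by simp
    have "lc p K \<alpha> yd k $ l = (\<Sum>j<K. ((C *\<^sub>v xd (j + k)) $ l + (D *\<^sub>v ud (j + k)) $ l + r $ l) * \<alpha> $ j)"
      unfolding lc_def using l step cx cu C D r by (auto intro!: sum.cong)
    also have "\<dots> = (\<Sum>j<K. (C *\<^sub>v xd (j + k)) $ l * \<alpha> $ j) + (\<Sum>j<K. (D *\<^sub>v ud (j + k)) $ l * \<alpha> $ j) + r $ l * (\<Sum>j<K. \<alpha> $ j)"
      by (simp add: distrib_right sum.distrib sum_distrib_left)
    also have "\<dots> = (C *\<^sub>v lc n K \<alpha> xd k + D *\<^sub>v lc m K \<alpha> ud k + r) $ l"
      using mat_lc[OF C cx, of \<alpha>] mat_lc[OF D cu, of \<alpha>] l C D r s by simp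
    finally show "lc p K \<alpha> yd k $ l = (C *\<^sub>v lc n K \<alpha> xd k + D *\<^sub>v lc m K \<alpha> ud k + r) $ l" .
  qed (use C D r in simp)
qed

lemma (in vec_space) full_rank_colspace:
  assumes M: "M \<in> carrier_mat n nc" and rk: "rank M = n"
  shows "carrier_vec n \<subseteq> span (set (cols M))"
proof -
  let ?S = "set (cols M)"
  have S: "?S \<subseteq> carrier V" using M cols_dim[of M] by simp
  have sub: "submodule class_ring (span ?S) V" using S span_is_submodule by simp
  have vsW: "vectorspace class_ring (span_vs ?S)"
    using S span_is_subspace subspace_def subspace_is_vs by simp
  have fdW: "vectorspace.fin_dim class_ring (vs (span ?S))" using fin_dim_span_cols[OF M] .
  obtain b where b: "finite b" "vectorspace.basis class_ring (vs (span ?S)) b"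
    using vectorspace.finite_basis_exists[OF vsW fdW] by blast
  have cb: "card b = n"
    using vectorspace.dim_basis[OF vsW b] rk unfolding rank_def by simp
  have bW: "b \<subseteq> span ?S" using b(2) unfolding vectorspace.basis_def[OF vsW] by simp
  have li: "LinearCombinations.module.lin_indpt class_ring (vs (span ?S)) b"
    using b(2) unfolding vectorspace.basis_def[OF vsW] by simp
  then have li2: "lin_indpt b" using span_li_not_depend(2)[OF bW sub] by simp
  have bV: "b \<subseteq> carrier_vec n" using bW sub unfolding submodule_def by auto
  have "basis b" by (rule dim_li_is_basis[OF fin_dim b(1) bV li2]) (simp add: cb dim_is_n)
  then have "span b = carrier V" unfolding basis_def by simp
  moreover have "span b \<subseteq> span ?S" using span_is_subset[OF bW sub] .
  ultimately show ?thesis by simp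
qed

lemma full_rank_surj:
  fixes M :: "real mat"
  assumes M: "M \<in> carrier_mat n nc" and rk: "vec_space.rank n M = n" and b: "b \<in> carrier_vec n"
  shows "\<exists>x\<in>carrier_vec nc. M *\<^sub>v x = b"
proof -
  have "b \<in> vec_space.col_space n M"
    using vec_space.full_rank_colspace[OF M rk] b unfolding vec_space.col_space_def by auto
  then show ?thesis using vec_space.col_space_eq[OF M] M by auto
qed

lemma stack1:
  assumes "w 0 \<in> carrier_vec n"
  shows "stack n 1 w = w 0"
  using assms by (intro eq_vecI) (auto simp: stack_def)

theorem theorem1:
  fixes A B C D :: "real mat" and e r :: "real vec" and n m p L N :: nat
    and ud xd yd :: "nat \<Rightarrow> real vec"
  assumes "A \<in> carrier_mat n n" and "B \<in> carrier_mat n m"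
    and "C \<in> carrier_mat p n" and "D \<in> carrier_mat p m"
    and "e \<in> carrier_vec n" and "r \<in> carrier_vec p"
    and "is_traj A B C D e r n m N ud xd yd"
    and "1 \<le> L" and "L \<le> N"
    and "mrank (pe_mat m n L N ud xd) = m * L + n + 1"
  shows "\<forall>u y :: nat \<Rightarrow> real vec.
           (\<forall>k<L. u k \<in> carrier_vec m \<and> y k \<in> carrier_vec p) \<longrightarrow>
           ((\<exists>x. is_traj A B C D e r n m L u x y) \<longleftrightarrow>
            (\<exists>\<alpha> \<in> carrier_vec (N - L + 1).
               (\<Sum>i<N - L + 1. \<alpha> $ i) = 1 \<and>
               hankel m L N ud *\<^sub>v \<alpha> = stack m L u \<and>
               hankel p L N yd *\<^sub>v \<alpha> = stack p L y))"
proof (intro allI impI)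
  fix u y :: "nat \<Rightarrow> real vec"
  assume uy: "\<forall>k<L. u k \<in> carrier_vec m \<and> y k \<in> carrier_vec p"
  define K where "K = N - L + 1"
  have uc: "\<forall>k<L. u k \<in> carrier_vec m" and yc: "\<forall>k<L. y k \<in> carrier_vec p" using uy by auto
  note A = assms(1) and B = assms(2) and C = assms(3) and D = assms(4) and e = assms(5)
    and r = assms(6) and tr = assms(7) and LN = assms(9)
  show "(\<exists>x. is_traj A B C D e r n m L u x y) \<longleftrightarrow>
            (\<exists>\<alpha> \<in> carrier_vec (N - L + 1).
               (\<Sum>i<N - L + 1. \<alpha> $ i) = 1 \<and>
               hankel m L N ud *\<^sub>v \<alpha> = stack m L u \<and>
               hankel p L N yd *\<^sub>v \<alpha> = stack p L y)"
  proof
    assume "\<exists>x. is_traj A B C D e r n m L u x y"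
    then obtain x where trx: "is_traj A B C D e r n m L u x y" by blast
    have x0: "x 0 \<in> carrier_vec n" using trx assms(8) unfolding is_traj_def by auto
    let ?Hu = "hankel m L N ud" and ?Hx = "hankel n 1 (N - L + 1) xd"
      and ?O = "mat 1 (N - L + 1) (\<lambda>_. 1) :: real mat"
    have Hu: "?Hu \<in> carrier_mat (m * L) (N - L + 1)" by (rule hankel_carrier)
    have Hx: "?Hx \<in> carrier_mat n (N - L + 1)" using hankel_carrier[of n 1 "N - L + 1" xd] by simp
    have O: "?O \<in> carrier_mat 1 (N - L + 1)" by simp
    have P: "pe_mat m n L N ud xd \<in> carrier_mat (m * L + n + 1) (N - L + 1)"
      unfolding pe_mat_def using Hu Hx O by (intro carrier_append_rows) auto
    have rk: "vec_space.rank (m * L + n + 1) (pe_mat m n L N ud xd) = m * L + n + 1"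
      using assms(10) P unfolding mrank_def by simp
    define b where "b = (stack m L u @\<^sub>v x 0) @\<^sub>v vec 1 (\<lambda>_. 1 :: real)"
    have sc: "stack m L u \<in> carrier_vec (m * L)" by (simp add: stack_def)
    have bc: "b \<in> carrier_vec (m * L + n + 1)" unfolding b_def using sc x0 by (intro append_carrier_vec) auto
    obtain \<alpha> where ac: "\<alpha> \<in> carrier_vec (N - L + 1)" and Pa: "pe_mat m n L N ud xd *\<^sub>v \<alpha> = b"
      using full_rank_surj[OF P rk bc] by blast
    have "pe_mat m n L N ud xd *\<^sub>v \<alpha> = ((?Hu *\<^sub>v \<alpha>) @\<^sub>v (?Hx *\<^sub>v \<alpha>)) @\<^sub>v (?O *\<^sub>v \<alpha>)"
      unfolding pe_mat_def
      by (subst mat_mult_append[OF carrier_append_rows[OF Hu Hx] O ac])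
         (simp only: mat_mult_append[OF Hu Hx ac])
    then have eqs: "((?Hu *\<^sub>v \<alpha>) @\<^sub>v (?Hx *\<^sub>v \<alpha>)) @\<^sub>v (?O *\<^sub>v \<alpha>) = (stack m L u @\<^sub>v x 0) @\<^sub>v vec 1 (\<lambda>_. 1)"
      using Pa b_def by simp
    have c1: "(?Hu *\<^sub>v \<alpha>) @\<^sub>v (?Hx *\<^sub>v \<alpha>) \<in> carrier_vec (m * L + n)" using Hu Hx ac by auto
    have c2: "stack m L u @\<^sub>v x 0 \<in> carrier_vec (m * L + n)" using sc x0 by auto
    from eqs have e1: "(?Hu *\<^sub>v \<alpha>) @\<^sub>v (?Hx *\<^sub>v \<alpha>) = stack m L u @\<^sub>v x 0"
      and e2: "?O *\<^sub>v \<alpha> = vec 1 (\<lambda>_. 1)"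
      using append_vec_eq[OF c1 c2] by auto
    from e1 have eu: "?Hu *\<^sub>v \<alpha> = stack m L u" and ex: "?Hx *\<^sub>v \<alpha> = x 0"
    proof -
      have hu: "?Hu *\<^sub>v \<alpha> \<in> carrier_vec (m * L)" using Hu ac by (rule mult_mat_vec_carrier)
      show "?Hu *\<^sub>v \<alpha> = stack m L u" "?Hx *\<^sub>v \<alpha> = x 0"
        using append_vec_eq[OF hu sc] e1 by auto
    qed
    have "(?O *\<^sub>v \<alpha>) $ 0 = 1" using e2 by simp
    then have sum1: "(\<Sum>i<N - L + 1. \<alpha> $ i) = 1"
      using ac by (simp add: mult_mat_vec_def scalar_prod_def lessThan_atLeast0)
    have ac1: "\<alpha> \<in> carrier_vec (N - L + 1 - 1 + 1)" using ac by simp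
    have "\<forall>k<1. lc n (N - L + 1 - 1 + 1) \<alpha> xd k = x 0"
      using hankel_eq_stack[OF ac1, of "\<lambda>_. x 0" n xd] ex stack1[of "\<lambda>_. x 0" n] x0 by simp
    then have X0: "lc n K \<alpha> xd 0 = x 0" by (simp add: K_def)
    have U: "\<forall>k<L. lc m K \<alpha> ud k = u k"
      using hankel_eq_stack[OF ac uc, of ud] eu by (simp add: K_def)
    have sumK: "(\<Sum>i<K. \<alpha> $ i) = 1" using sum1 by (simp add: K_def)
    have X: "k < L \<Longrightarrow> lc n K \<alpha> xd k = x k" for k
    proof (induction k)
      case 0 then show ?case using X0 by simp
    next
      case (Suc k)
      then have k1: "k + 1 < L" by simp
      have "lc n K \<alpha> xd (k + 1) = A *\<^sub>v lc n K \<alpha> xd k + B *\<^sub>v lc m K \<alpha> ud k + e"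
        by (rule dyn_lc[OF A B e tr sumK K_def LN k1])
      also have "\<dots> = A *\<^sub>v x k + B *\<^sub>v u k + e" using Suc U k1 by simp
      also have "\<dots> = x (k + 1)" using trx k1 unfolding is_traj_def by simp
      finally show ?case by simp
    qed
    have Y: "\<forall>k<L. lc p K \<alpha> yd k = y k"
    proof (intro allI impI)
      fix k assume k: "k < L"
      have "lc p K \<alpha> yd k = C *\<^sub>v lc n K \<alpha> xd k + D *\<^sub>v lc m K \<alpha> ud k + r"
        by (rule out_lc[OF C D r tr sumK K_def LN k])
      also have "\<dots> = C *\<^sub>v x k + D *\<^sub>v u k + r" using X[OF k] U k by simp
      also have "\<dots> = y k" using trx k unfolding is_traj_def by simp
      finally show "lc p K \<alpha> yd k = y k" .
    qed
    have ey: "hankel p L N yd *\<^sub>v \<alpha> = stack p L y"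
      using hankel_eq_stack[OF ac yc, of yd] Y by (simp add: K_def)
    show "\<exists>\<alpha> \<in> carrier_vec (N - L + 1).
               (\<Sum>i<N - L + 1. \<alpha> $ i) = 1 \<and>
               hankel m L N ud *\<^sub>v \<alpha> = stack m L u \<and>
               hankel p L N yd *\<^sub>v \<alpha> = stack p L y"
      using ac sum1 eu ey by blast
  next
    assume "\<exists>\<alpha> \<in> carrier_vec (N - L + 1).
               (\<Sum>i<N - L + 1. \<alpha> $ i) = 1 \<and>
               hankel m L N ud *\<^sub>v \<alpha> = stack m L u \<and>
               hankel p L N yd *\<^sub>v \<alpha> = stack p L y"
    then obtain \<alpha> where ac: "\<alpha> \<in> carrier_vec (N - L + 1)" and sum1: "(\<Sum>i<N - L + 1. \<alpha> $ i) = 1"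
      and eu: "hankel m L N ud *\<^sub>v \<alpha> = stack m L u" and ey: "hankel p L N yd *\<^sub>v \<alpha> = stack p L y"
      by blast
    have sumK: "(\<Sum>i<K. \<alpha> $ i) = 1" using sum1 by (simp add: K_def)
    have U: "\<forall>k<L. lc m K \<alpha> ud k = u k"
      using hankel_eq_stack[OF ac uc, of ud] eu by (simp add: K_def)
    have Y: "\<forall>k<L. lc p K \<alpha> yd k = y k"
      using hankel_eq_stack[OF ac yc, of yd] ey by (simp add: K_def)
    have "is_traj A B C D e r n m L u (lc n K \<alpha> xd) y"
      unfolding is_traj_def
    proof (intro conjI allI impI)
      fix k assume k: "k < L"
      show "u k \<in> carrier_vec m" using uc k by simp
      show "lc n K \<alpha> xd k \<in> carrier_vec n" by simp
      have "lc p K \<alpha> yd k = C *\<^sub>v lc n K \<alpha> xd k + D *\<^sub>v lc m K \<alpha> ud k + r"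
        by (rule out_lc[OF C D r tr sumK K_def LN k])
      then show "y k = C *\<^sub>v lc n K \<alpha> xd k + D *\<^sub>v u k + r" using U Y k by simp
    next
      fix k assume k1: "k + 1 < L"
      have "lc n K \<alpha> xd (k + 1) = A *\<^sub>v lc n K \<alpha> xd k + B *\<^sub>v lc m K \<alpha> ud k + e"
        by (rule dyn_lc[OF A B e tr sumK K_def LN k1])
      then show "lc n K \<alpha> xd (k + 1) = A *\<^sub>v lc n K \<alpha> xd k + B *\<^sub>v u k + e" using U k1 by simp
    qed
    then show "\<exists>x. is_traj A B C D e r n m L u x y" by blast
  qed
qed

end
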